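(* Let $\mathbb{X}$ be a basic reverse differential restriction category with countable disjoint joins. Let $b_T,b_F:\Gamma\times U\to 1$ be maps with $\overline{b_T}\,\overline{b_F}$ nowhere defined, and let $m,n,v:\Gamma\times U\to T$ be maps. For any map $h:\Gamma\times U\to X$ write $h':=(\pi_0\times 1_U)h:(\Gamma\times U)\times U\to X$. Then $$\langle\langle 1,\pi_1\rangle,v\rangle R\big[\overline{b_T'}\,m'\vee\overline{b_F'}\,n'\big]\pi_1=\overline{b_T}\,\langle\langle 1,\pi_1\rangle,v\rangle R[m']\pi_1\ \vee\ \overline{b_F}\,\langle\langle 1,\pi_1\rangle,v\rangle R[n']\pi_1,$$ where $\langle 1,\pi_1\rangle:\Gamma\times U\to(\Gamma\times U)\times U$. In SDPL terms: $$[\![\Gamma,x{:}U\vdash v.\mathrm{rd}(x{:}U.\ \texttt{if } b\texttt{ then }m\texttt{ else }n)(x)]\!]=[\![\Gamma,x{:}U\vdash \texttt{if } b\texttt{ then } v.\mathrm{rd}(x{:}U.m)(x)\texttt{ else }v.\mathrm{rd}(x{:}U.n)(x)]\!].$$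
   Context: Composition is written in diagrammatic order: $fg$ means "first $f$, then $g$". A restriction category is a category with an operation sending each $f:A\to B$ to a map $\bar f:A\to A$ such that $\bar f f=f$, $\bar f\bar g=\bar g\bar f$ (for $f,g$ with common domain), $\overline{\bar f g}=\bar f\bar g$, and $f\bar g=\overline{fg}\,f$. A map $f$ is total if $\bar f=1$. For parallel maps: - $f\le g$ means $\bar f g=f$; - a nowhere-defined map $\emptyset$ is a least element for $\le$; - $f,g$ are disjoint if $\bar f g$ is nowhere defined; - the join $\bigvee_i f_i$ of a family is its least upper bound for $\le$. "Countable disjoint joins" means that every countable family of pairwise disjoint parallel maps has a join, and composition preserves such joins on both sides: $h(\bigvee_i f_i)k=\bigvee_i hf_ik$. The category has restriction products if: - there is an object $1$ with a total map $!_A:A\to 1$ for each $A$ such that every $f:A\to1$ equals $\bar f\,!_A$; - for all $A,B$ there is an object $A\times B$ with total maps $\pi_0,\pi_1$ such that for all $f:C\to A$, $g:C\to B$ there is a unique $\langle f,g\rangle$ with $\langle f,g\rangle\pi_0=\bar g f$ and $\langle f,g\rangle\pi_1=\bar f g$. Write $f\times g=\langle\pi_0f,\pi_1g\rangle$. A Cartesian left additive restriction category is a restriction category with restriction products in which every hom-set is a commutative monoid $(+,0)$ such that: - $\overline{f+g}=\bar f\bar g$ and $\bar 0=1$; - $x(f+g)=xf+xg$ and $x0=\bar x 0$; - $(f+g)\pi_i=f\pi_i+g\pi_i$ and $0\pi_i=0$. Write $\iota_0=\langle 1,0\rangle$ and $\iota_1=\langle 0,1\rangle$. A basic reverse differential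 restriction category is a Cartesian left additive restriction category with an operation sending each $f:A\to B$ to $R[f]:A\times B\to A$ satisfying: - [RD.1] $R[f+g]=R[f]+R[g]$ and $R[0]=0$. - [RD.2] $\langle a,b+c\rangle R[f]=\langle a,b\rangle R[f]+\langle a,c\rangle R[f]$ and $\langle a,0\rangle R[f]=\overline{af}\,0$. - [RD.3] $R[\pi_j]=\pi_1\iota_j$. - [RD.4] $R[\langle f,g\rangle]=(1\times\pi_0)R[f]+(1\times\pi_1)R[g]$. - [RD.5] $R[fg]=\langle\pi_0,\langle\pi_0f,\pi_1\rangle R[g]\rangle R[f]$. - [RD.8] $\overline{R[f]}=\bar f\times 1$. - [RD.9] $R[\bar f]=(\bar f\times1)\pi_1$. Semantics of SDPL used in the second formulation: - A predicate $b$ is interpreted by a pair $(b_T,b_F)$ of maps into $1$ with disjoint restrictions. - $[\![\texttt{if } b\texttt{ then }m\texttt{ else }n]\!]=\overline{b_T}[\![m]\!]\vee\overline{b_F}[\![n]\!]$. - $[\![v.\mathrm{rd}(x.m)(a)]\!]=\langle\langle 1,[\![a]\!]\rangle,[\![v]\!]\rangle R[[\![m]\!]]\pi_1$. - The term $m$ under the rebinding of $x$ in context $(\Gamma\times U)\times U$ is interpreted as $m'$. *)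

theory Defs
  imports Main "HOL-Library.Countable_Set"
begin

text \<open>Every element of
the arrow type is an arrow with domain and codomain; every element of the object
type is an object. Composition is written in diagrammatic order:
Cmp C f g means first f, then g.\<close>

record ('o, 'a) rdcat =
  Dom  :: "'a \<Rightarrow> 'o"
  Cod  :: "'a \<Rightarrow> 'o"
  Id   :: "'o \<Rightarrow> 'a"
  Cmp  :: "'a \<Rightarrow> 'a \<Rightarrow> 'a"
  Rst  :: "'a \<Rightarrow> 'a"
  One  :: "'o"
  Bang :: "'o \<Rightarrow> 'a"
  Prod :: "'o \<Rightarrow> 'o \<Rightarrow> 'o"
  P0   :: "'o \<Rightarrow> 'o \<Rightarrow> 'a"
  P1   :: "'o \<Rightarrow> 'o \<Rightarrow> 'a"
  Pair :: "'a \<Rightarrow> 'a \<Rightarrow> 'a"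
  Add  :: "'a \<Rightarrow> 'a \<Rightarrow> 'a"
  Zero :: "'o \<Rightarrow> 'o \<Rightarrow> 'a"
  RD   :: "'a \<Rightarrow> 'a"

definition hom :: "('o, 'a, 'z) rdcat_scheme \<Rightarrow> 'o \<Rightarrow> 'o \<Rightarrow> 'a set" where
  "hom C A B = {f. Dom C f = A \<and> Cod C f = B}"

definition is_category :: "('o, 'a, 'z) rdcat_scheme \<Rightarrow> bool" where
  "is_category C \<longleftrightarrow>
     (\<forall>A. Id C A \<in> hom C A A) \<and>
     (\<forall>f g. Cod C f = Dom C g \<longrightarrow> Cmp C f g \<in> hom C (Dom C f) (Cod C g)) \<and>
     (\<forall>f g h. Cod C f = Dom C g \<and> Cod C g = Dom C h \<longrightarrow>
         Cmp C (Cmp C f g) h = Cmp C f (Cmp C g h)) \<and>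
     (\<forall>f. Cmp C (Id C (Dom C f)) f = f \<and> Cmp C f (Id C (Cod C f)) = f)"

definition is_restriction_category :: "('o, 'a, 'z) rdcat_scheme \<Rightarrow> bool" where
  "is_restriction_category C \<longleftrightarrow> is_category C \<and>
     (\<forall>f. Rst C f \<in> hom C (Dom C f) (Dom C f)) \<and>
     (\<forall>f. Cmp C (Rst C f) f = f) \<and>
     (\<forall>f g. Dom C f = Dom C g \<longrightarrow> Cmp C (Rst C f) (Rst C g) = Cmp C (Rst C g) (Rst C f)) \<and>
     (\<forall>f g. Dom C f = Dom C g \<longrightarrow> Rst C (Cmp C (Rst C f) g) = Cmp C (Rst C f) (Rst C g)) \<and>
     (\<forall>f g. Cod C f = Dom C g \<longrightarrow> Cmp C f (Rst C g) = Cmp C (Rst C (Cmp C f g)) f)"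

definition total :: "('o, 'a, 'z) rdcat_scheme \<Rightarrow> 'a \<Rightarrow> bool" where
  "total C f \<longleftrightarrow> Rst C f = Id C (Dom C f)"

definition leq :: "('o, 'a, 'z) rdcat_scheme \<Rightarrow> 'a \<Rightarrow> 'a \<Rightarrow> bool" where
  "leq C f g \<longleftrightarrow> Cmp C (Rst C f) g = f"

definition nowhere_defined :: "('o, 'a, 'z) rdcat_scheme \<Rightarrow> 'a \<Rightarrow> bool" where
  "nowhere_defined C f \<longleftrightarrow> (\<forall>g \<in> hom C (Dom C f) (Cod C f). leq C f g)"

definition disjoint :: "('o, 'a, 'z) rdcat_scheme \<Rightarrow> 'a \<Rightarrow> 'a \<Rightarrow> bool" where
  "disjoint C f g \<longleftrightarrow> nowhere_defined C (Cmp C (Rst C f) g)"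

definition is_join :: "('o, 'a, 'z) rdcat_scheme \<Rightarrow> 'o \<Rightarrow> 'o \<Rightarrow> 'a set \<Rightarrow> 'a \<Rightarrow> bool" where
  "is_join C A B F j \<longleftrightarrow> F \<subseteq> hom C A B \<and> j \<in> hom C A B \<and>
     (\<forall>f\<in>F. leq C f j) \<and>
     (\<forall>g \<in> hom C A B. (\<forall>f\<in>F. leq C f g) \<longrightarrow> leq C j g)"

definition join :: "('o, 'a, 'z) rdcat_scheme \<Rightarrow> 'o \<Rightarrow> 'o \<Rightarrow> 'a set \<Rightarrow> 'a" where
  "join C A B F = (THE j. is_join C A B F j)"

definition has_countable_disjoint_joins :: "('o, 'a, 'z) rdcat_scheme \<Rightarrow> bool" where
  "has_countable_disjoint_joins C \<longleftrightarrow>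
     (\<forall>A B F. F \<subseteq> hom C A B \<and> countable F \<and>
        (\<forall>f\<in>F. \<forall>g\<in>F. f \<noteq> g \<longrightarrow> disjoint C f g) \<longrightarrow>
        (\<exists>j. is_join C A B F j) \<and>
        (\<forall>j A' B' h k. is_join C A B F j \<and> h \<in> hom C A' A \<and> k \<in> hom C B B' \<longrightarrow>
           is_join C A' B' ((\<lambda>f. Cmp C (Cmp C h f) k) ` F) (Cmp C (Cmp C h j) k)))"

definition has_restriction_products :: "('o, 'a, 'z) rdcat_scheme \<Rightarrow> bool" where
  "has_restriction_products C \<longleftrightarrow>
     (\<forall>A. Bang C A \<in> hom C A (One C) \<and> total C (Bang C A)) \<and>
     (\<forall>A f. f \<in> hom C A (One C) \<longrightarrow> f = Cmp C (Rst C f) (Bang C A)) \<and>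
     (\<forall>A B. P0 C A B \<in> hom C (Prod C A B) A \<and> P1 C A B \<in> hom C (Prod C A B) B \<and>
            total C (P0 C A B) \<and> total C (P1 C A B)) \<and>
     (\<forall>A B D f g. f \<in> hom C D A \<and> g \<in> hom C D B \<longrightarrow>
        Pair C f g \<in> hom C D (Prod C A B) \<and>
        Cmp C (Pair C f g) (P0 C A B) = Cmp C (Rst C g) f \<and>
        Cmp C (Pair C f g) (P1 C A B) = Cmp C (Rst C f) g \<and>
        (\<forall>h \<in> hom C D (Prod C A B).
           Cmp C h (P0 C A B) = Cmp C (Rst C g) f \<and> Cmp C h (P1 C A B) = Cmp C (Rst C f) g
           \<longrightarrow> h = Pair C f g))"

definition times :: "('o, 'a, 'z) rdcat_scheme \<Rightarrow> 'a \<Rightarrow> 'a \<Rightarrow> 'a" where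
  "times C f g = Pair C (Cmp C (P0 C (Dom C f) (Dom C g)) f) (Cmp C (P1 C (Dom C f) (Dom C g)) g)"

definition inj0 :: "('o, 'a, 'z) rdcat_scheme \<Rightarrow> 'o \<Rightarrow> 'o \<Rightarrow> 'a" where
  "inj0 C A B = Pair C (Id C A) (Zero C A B)"

definition inj1 :: "('o, 'a, 'z) rdcat_scheme \<Rightarrow> 'o \<Rightarrow> 'o \<Rightarrow> 'a" where
  "inj1 C A B = Pair C (Zero C B A) (Id C B)"

definition is_cartesian_left_additive :: "('o, 'a, 'z) rdcat_scheme \<Rightarrow> bool" where
  "is_cartesian_left_additive C \<longleftrightarrow>
     is_restriction_category C \<and> has_restriction_products C \<and>
     (\<forall>A B. Zero C A B \<in> hom C A B) \<and>
     (\<forall>A B. \<forall>f\<in>hom C A B. \<forall>g\<in>hom C A B. Add C f g \<in> hom C A B \<and> Add C f g = Add C g f) \<and>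
     (\<forall>A B. \<forall>f\<in>hom C A B. \<forall>g\<in>hom C A B. \<forall>h\<in>hom C A B.
        Add C (Add C f g) h = Add C f (Add C g h)) \<and>
     (\<forall>A B. \<forall>f\<in>hom C A B. Add C f (Zero C A B) = f) \<and>
     (\<forall>A B. \<forall>f\<in>hom C A B. \<forall>g\<in>hom C A B. Rst C (Add C f g) = Cmp C (Rst C f) (Rst C g)) \<and>
     (\<forall>A B. Rst C (Zero C A B) = Id C A) \<and>
     (\<forall>D A B. \<forall>x\<in>hom C D A. \<forall>f\<in>hom C A B. \<forall>g\<in>hom C A B.
        Cmp C x (Add C f g) = Add C (Cmp C x f) (Cmp C x g)) \<and>
     (\<forall>D A B. \<forall>x\<in>hom C D A. Cmp C x (Zero C A B) = Cmp C (Rst C x) (Zero C D B)) \<and>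
     (\<forall>D A B. \<forall>f\<in>hom C D (Prod C A B). \<forall>g\<in>hom C D (Prod C A B).
        Cmp C (Add C f g) (P0 C A B) = Add C (Cmp C f (P0 C A B)) (Cmp C g (P0 C A B)) \<and>
        Cmp C (Add C f g) (P1 C A B) = Add C (Cmp C f (P1 C A B)) (Cmp C g (P1 C A B))) \<and>
     (\<forall>D A B. Cmp C (Zero C D (Prod C A B)) (P0 C A B) = Zero C D A \<and>
              Cmp C (Zero C D (Prod C A B)) (P1 C A B) = Zero C D B)"

definition is_basic_rdrc :: "('o, 'a, 'z) rdcat_scheme \<Rightarrow> bool" where
  "is_basic_rdrc C \<longleftrightarrow> is_cartesian_left_additive C \<and>
     (\<forall>A B. \<forall>f\<in>hom C A B. RD C f \<in> hom C (Prod C A B) A) \<and>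
     \<comment> \<open>RD.1\<close>
     (\<forall>A B. \<forall>f\<in>hom C A B. \<forall>g\<in>hom C A B. RD C (Add C f g) = Add C (RD C f) (RD C g)) \<and>
     (\<forall>A B. RD C (Zero C A B) = Zero C (Prod C A B) A) \<and>
     \<comment> \<open>RD.2\<close>
     (\<forall>D A B. \<forall>f\<in>hom C A B. \<forall>a\<in>hom C D A. \<forall>b\<in>hom C D B. \<forall>c\<in>hom C D B.
        Cmp C (Pair C a (Add C b c)) (RD C f) =
          Add C (Cmp C (Pair C a b) (RD C f)) (Cmp C (Pair C a c) (RD C f))) \<and>
     (\<forall>D A B. \<forall>f\<in>hom C A B. \<forall>a\<in>hom C D A.
        Cmp C (Pair C a (Zero C D B)) (RD C f) = Cmp C (Rst C (Cmp C a f)) (Zero C D A)) \<and>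
     \<comment> \<open>RD.3\<close>
     (\<forall>A B. RD C (P0 C A B) = Cmp C (P1 C (Prod C A B) A) (inj0 C A B) \<and>
            RD C (P1 C A B) = Cmp C (P1 C (Prod C A B) B) (inj1 C A B)) \<and>
     \<comment> \<open>RD.4\<close>
     (\<forall>A B D. \<forall>f\<in>hom C A B. \<forall>g\<in>hom C A D.
        RD C (Pair C f g) =
          Add C (Cmp C (times C (Id C A) (P0 C B D)) (RD C f))
                (Cmp C (times C (Id C A) (P1 C B D)) (RD C g))) \<and>
     \<comment> \<open>RD.5\<close>
     (\<forall>A B D. \<forall>f\<in>hom C A B. \<forall>g\<in>hom C B D.
        RD C (Cmp C f g) =
          Cmp C (Pair C (P0 C A D)
                        (Cmp C (Pair C (Cmp C (P0 C A D) f) (P1 C A D)) (RD C g)))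
                (RD C f)) \<and>
     \<comment> \<open>RD.8\<close>
     (\<forall>A B. \<forall>f\<in>hom C A B. Rst C (RD C f) = times C (Rst C f) (Id C B)) \<and>
     \<comment> \<open>RD.9\<close>
     (\<forall>A B. \<forall>f\<in>hom C A B.
        RD C (Rst C f) = Cmp C (times C (Rst C f) (Id C A)) (P1 C A A))"

definition rebind :: "('o, 'a, 'z) rdcat_scheme \<Rightarrow> 'o \<Rightarrow> 'o \<Rightarrow> 'a \<Rightarrow> 'a" where
  "rebind C G U h = Cmp C (times C (P0 C G U) (Id C U)) h"

end

theory Submission
  imports Defs
begin


locale RR =
  fixes C :: "('o, 'a, 'z) rdcat_scheme"
  assumes basic: "is_basic_rdrc C"
    and joins: "has_countable_disjoint_joins C"
begin

abbreviation cmp (infixl "\<odot>" 70) where "f \<odot> g \<equiv> Cmp C f g"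
abbreviation rs where "rs f \<equiv> Rst C f"

lemma cla: "is_cartesian_left_additive C" using basic by (simp add: is_basic_rdrc_def)
lemma rc: "is_restriction_category C" using cla by (simp add: is_cartesian_left_additive_def)
lemma cat: "is_category C" using rc by (simp add: is_restriction_category_def)
lemma rp: "has_restriction_products C" using cla by (simp add: is_cartesian_left_additive_def)

lemma id_dom[simp]: "Dom C (Id C A) = A" and id_cod[simp]: "Cod C (Id C A) = A"
  using cat by (auto simp: is_category_def hom_def)

lemma cmp_dom[simp]: "Cod C f = Dom C g \<Longrightarrow> Dom C (f \<odot> g) = Dom C f"
  and cmp_cod[simp]: "Cod C f = Dom C g \<Longrightarrow> Cod C (f \<odot> g) = Cod C g"
  using cat by (auto simp: is_category_def hom_def)

lemma assoc[simp]: "Cod C f = Dom C g \<Longrightarrow> Cod C g = Dom C h \<Longrightarrow> f \<odot> g \<odot> h = f \<odot> (g \<odot> h)"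
  using cat by (auto simp: is_category_def)

lemma id_l[simp]: "Dom C f = A \<Longrightarrow> Id C A \<odot> f = f"
  and id_r[simp]: "Cod C f = B \<Longrightarrow> f \<odot> Id C B = f"
  using cat by (auto simp: is_category_def)

lemma rs_hom: "rs f \<in> hom C (Dom C f) (Dom C f)"
  using rc unfolding is_restriction_category_def by blast
lemma rs_dom[simp]: "Dom C (rs f) = Dom C f" and rs_cod[simp]: "Cod C (rs f) = Dom C f"
  using rs_hom[of f] by (auto simp: hom_def)
lemma rs_f[simp]: "rs f \<odot> f = f" using rc unfolding is_restriction_category_def by blast
lemma rcomm: "Dom C f = Dom C g \<Longrightarrow> rs f \<odot> rs g = rs g \<odot> rs f"
  using rc unfolding is_restriction_category_def by blast
lemma R4: "Dom C f = Dom C g \<Longrightarrow> rs (rs f \<odot> g) = rs f \<odot> rs g"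
  using rc unfolding is_restriction_category_def by blast
lemma R5: "Cod C f = Dom C g \<Longrightarrow> f \<odot> rs g = rs (f \<odot> g) \<odot> f"
  using rc unfolding is_restriction_category_def by blast

lemma rs_id[simp]: "rs (Id C A) = Id C A"
proof -
  have "rs (Id C A) \<odot> Id C A = rs (Id C A)" by (rule id_r) simp
  thus ?thesis by (metis rs_f)
qed

lemma rs_rs[simp]: "rs (rs f) = rs f"
  using R4[of f "Id C (Dom C f)"] by simp

lemma rs_idem[simp]: "rs f \<odot> rs f = rs f" using rs_f[of "rs f"] by simp

lemma rs_f2[simp]: "Cod C f = Dom C g \<Longrightarrow> rs f \<odot> (f \<odot> g) = f \<odot> g"
  using assoc[of "rs f" f g] by simp

lemma rs_idem2[simp]: "Dom C g = Dom C f \<Longrightarrow> rs f \<odot> (rs f \<odot> g) = rs f \<odot> g"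
  using assoc[of "rs f" "rs f" g] by simp

lemma rs_lcomm: "Dom C f = Dom C g \<Longrightarrow> Dom C h = Dom C f \<Longrightarrow> rs f \<odot> (rs g \<odot> h) = rs g \<odot> (rs f \<odot> h)"
proof -
  assume a: "Dom C f = Dom C g" "Dom C h = Dom C f"
  have "rs f \<odot> (rs g \<odot> h) = (rs f \<odot> rs g) \<odot> h" using a by simp
  also have "\<dots> = (rs g \<odot> rs f) \<odot> h" using rcomm[OF a(1)] by simp
  also have "\<dots> = rs g \<odot> (rs f \<odot> h)" using a by simp
  finally show ?thesis .
qed

lemma D3: "Cod C f = Dom C g \<Longrightarrow> rs (f \<odot> g) \<odot> rs f = rs (f \<odot> g)"
proof -
  assume a: "Cod C f = Dom C g"
  have "rs (f \<odot> g) = rs (rs f \<odot> (f \<odot> g))" using a by simp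
  also have "\<dots> = rs f \<odot> rs (f \<odot> g)" by (rule R4) (use a in simp)
  also have "\<dots> = rs (f \<odot> g) \<odot> rs f" using a by (simp add: rcomm)
  finally show ?thesis by simp
qed

lemma D2: "Cod C f = Dom C g \<Longrightarrow> rs (f \<odot> rs g) = rs (f \<odot> g)"
proof -
  assume a: "Cod C f = Dom C g"
  have "rs (f \<odot> rs g) = rs (rs (f \<odot> g) \<odot> f)" using R5[OF a] by simp
  also have "\<dots> = rs (f \<odot> g) \<odot> rs f" using a by (simp add: R4)
  also have "\<dots> = rs (f \<odot> g)" using D3[OF a] .
  finally show ?thesis .
qed

lemma p0_dom[simp]: "Dom C (P0 C A B) = Prod C A B" and p0_cod[simp]: "Cod C (P0 C A B) = A"
  and p1_dom[simp]: "Dom C (P1 C A B) = Prod C A B" and p1_cod[simp]: "Cod C (P1 C A B) = B"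
  and p0_tot[simp]: "rs (P0 C A B) = Id C (Prod C A B)"
  and p1_tot[simp]: "rs (P1 C A B) = Id C (Prod C A B)"
proof -
  have "\<forall>A B. P0 C A B \<in> hom C (Prod C A B) A \<and> P1 C A B \<in> hom C (Prod C A B) B \<and>
            total C (P0 C A B) \<and> total C (P1 C A B)"
    using rp unfolding has_restriction_products_def by (elim conjE) assumption
  hence "P0 C A B \<in> hom C (Prod C A B) A \<and> P1 C A B \<in> hom C (Prod C A B) B \<and>
            total C (P0 C A B) \<and> total C (P1 C A B)" by blast
  thus "Dom C (P0 C A B) = Prod C A B" "Cod C (P0 C A B) = A" "Dom C (P1 C A B) = Prod C A B" "Cod C (P1 C A B) = B"
    "rs (P0 C A B) = Id C (Prod C A B)" "rs (P1 C A B) = Id C (Prod C A B)"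
    by (auto simp: hom_def total_def)
qed

lemma pairax: "Dom C f = D \<Longrightarrow> Dom C g = D \<Longrightarrow> Cod C f = A \<Longrightarrow> Cod C g = B \<Longrightarrow>
        Pair C f g \<in> hom C D (Prod C A B) \<and>
        Cmp C (Pair C f g) (P0 C A B) = Cmp C (Rst C g) f \<and>
        Cmp C (Pair C f g) (P1 C A B) = Cmp C (Rst C f) g \<and>
        (\<forall>h \<in> hom C D (Prod C A B).
           Cmp C h (P0 C A B) = Cmp C (Rst C g) f \<and> Cmp C h (P1 C A B) = Cmp C (Rst C f) g
           \<longrightarrow> h = Pair C f g)"
proof -
  assume a: "Dom C f = D" "Dom C g = D" "Cod C f = A" "Cod C g = B"
  have "\<forall>A B D f g. f \<in> hom C D A \<and> g \<in> hom C D B \<longrightarrow>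
        Pair C f g \<in> hom C D (Prod C A B) \<and>
        Cmp C (Pair C f g) (P0 C A B) = Cmp C (Rst C g) f \<and>
        Cmp C (Pair C f g) (P1 C A B) = Cmp C (Rst C f) g \<and>
        (\<forall>h \<in> hom C D (Prod C A B).
           Cmp C h (P0 C A B) = Cmp C (Rst C g) f \<and> Cmp C h (P1 C A B) = Cmp C (Rst C f) g
           \<longrightarrow> h = Pair C f g)" (is ?H)
    using rp unfolding has_restriction_products_def by (elim conjE) assumption
  note H = this
  have fg: "f \<in> hom C D A \<and> g \<in> hom C D B" using a by (simp add: hom_def)
  show ?thesis by (rule mp[OF spec[OF spec[OF spec[OF spec[OF spec[OF H, of A], of B], of D], of f], of g] fg])
qed

lemma pairax2: assumes "Dom C f = Dom C g" "Cod C f = A" "Cod C g = B"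
  shows "Pair C f g \<in> hom C (Dom C f) (Prod C A B) \<and>
        Cmp C (Pair C f g) (P0 C A B) = Cmp C (Rst C g) f \<and>
        Cmp C (Pair C f g) (P1 C A B) = Cmp C (Rst C f) g \<and>
        (\<forall>h \<in> hom C (Dom C f) (Prod C A B).
           Cmp C h (P0 C A B) = Cmp C (Rst C g) f \<and> Cmp C h (P1 C A B) = Cmp C (Rst C f) g
           \<longrightarrow> h = Pair C f g)"
  by (rule pairax[of f "Dom C f" g A B, OF refl assms(1)[symmetric] assms(2,3)])

lemma pair_hom: "Dom C f = Dom C g \<Longrightarrow> Pair C f g \<in> hom C (Dom C f) (Prod C (Cod C f) (Cod C g))"
  using pairax2[of f g "Cod C f" "Cod C g"] by blast

lemma pair_dom[simp]: "Dom C f = Dom C g \<Longrightarrow> Dom C (Pair C f g) = Dom C f"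
  and pair_cod[simp]: "Dom C f = Dom C g \<Longrightarrow> Cod C (Pair C f g) = Prod C (Cod C f) (Cod C g)"
  using pair_hom[of f g] unfolding hom_def by blast+

lemma pair_p0[simp]: "Dom C f = Dom C g \<Longrightarrow> Cod C f = A \<Longrightarrow> Cod C g = B \<Longrightarrow> Pair C f g \<odot> P0 C A B = rs g \<odot> f"
  and pair_p1[simp]: "Dom C f = Dom C g \<Longrightarrow> Cod C f = A \<Longrightarrow> Cod C g = B \<Longrightarrow> Pair C f g \<odot> P1 C A B = rs f \<odot> g"
  using pairax2[of f g A B] by blast+

lemma pair_p0'[simp]: "Dom C f = Dom C g \<Longrightarrow> Cod C f = A \<Longrightarrow> Cod C g = B \<Longrightarrow> Dom C h = A \<Longrightarrow> Pair C f g \<odot> (P0 C A B \<odot> h) = rs g \<odot> (f \<odot> h)"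
  using assoc[of "Pair C f g" "P0 C A B" h] assoc[of "rs g" f h] by simp
lemma pair_p1'[simp]: "Dom C f = Dom C g \<Longrightarrow> Cod C f = A \<Longrightarrow> Cod C g = B \<Longrightarrow> Dom C h = B \<Longrightarrow> Pair C f g \<odot> (P1 C A B \<odot> h) = rs f \<odot> (g \<odot> h)"
  using assoc[of "Pair C f g" "P1 C A B" h] assoc[of "rs f" g h] by simp

lemma pair_uniq: "Dom C f = Dom C g \<Longrightarrow> Cod C f = A \<Longrightarrow> Cod C g = B \<Longrightarrow> Dom C h = Dom C f \<Longrightarrow> Cod C h = Prod C A B
   \<Longrightarrow> h \<odot> P0 C A B = rs g \<odot> f \<Longrightarrow> h \<odot> P1 C A B = rs f \<odot> g \<Longrightarrow> h = Pair C f g"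
proof -
  assume a: "Dom C f = Dom C g" "Cod C f = A" "Cod C g = B" "Dom C h = Dom C f" "Cod C h = Prod C A B"
     "h \<odot> P0 C A B = rs g \<odot> f" "h \<odot> P1 C A B = rs f \<odot> g"
  have "\<forall>h \<in> hom C (Dom C f) (Prod C A B).
           Cmp C h (P0 C A B) = Cmp C (Rst C g) f \<and> Cmp C h (P1 C A B) = Cmp C (Rst C f) g
           \<longrightarrow> h = Pair C f g"
    using pairax2[of f g A B] a(1-3) by blast
  moreover have "h \<in> hom C (Dom C f) (Prod C A B)" using a(4,5) by (simp add: hom_def)
  ultimately show ?thesis using a(6,7) by blast
qed

lemma times_dom[simp]: "Dom C (times C f g) = Prod C (Dom C f) (Dom C g)"
  and times_cod[simp]: "Cod C (times C f g) = Prod C (Cod C f) (Cod C g)"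
  by (simp_all add: times_def)

lemma pair_post: "Dom C f = Dom C g \<Longrightarrow> Cod C h = Dom C f \<Longrightarrow> h \<odot> Pair C f g = Pair C (h \<odot> f) (h \<odot> g)"
proof -
  assume a: "Dom C f = Dom C g" "Cod C h = Dom C f"
  show ?thesis
  proof (rule pair_uniq[where A="Cod C f" and B="Cod C g"])
    have "h \<odot> Pair C f g \<odot> P0 C (Cod C f) (Cod C g) = h \<odot> (rs g \<odot> f)" using a by simp
    also have "\<dots> = (h \<odot> rs g) \<odot> f" using a by simp
    also have "\<dots> = (rs (h \<odot> g) \<odot> h) \<odot> f" using R5[of h g] a by simp
    also have "\<dots> = rs (h \<odot> g) \<odot> (h \<odot> f)" using a by simp
    finally show "h \<odot> Pair C f g \<odot> P0 C (Cod C f) (Cod C g) = rs (h \<odot> g) \<odot> (h \<odot> f)" .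
    have "h \<odot> Pair C f g \<odot> P1 C (Cod C f) (Cod C g) = h \<odot> (rs f \<odot> g)" using a by simp
    also have "\<dots> = (h \<odot> rs f) \<odot> g" using a by simp
    also have "\<dots> = (rs (h \<odot> f) \<odot> h) \<odot> g" using R5[of h f] a by simp
    also have "\<dots> = rs (h \<odot> f) \<odot> (h \<odot> g)" using a by simp
    finally show "h \<odot> Pair C f g \<odot> P1 C (Cod C f) (Cod C g) = rs (h \<odot> f) \<odot> (h \<odot> g)" .
  qed (use a in simp_all)
qed

lemma pair_eta: "Pair C (P0 C A B) (P1 C A B) = Id C (Prod C A B)"
  by (rule pair_uniq[symmetric, where A=A and B=B]) simp_all

lemma rs_pair_l: "Dom C f = Dom C g \<Longrightarrow> rs g \<odot> Pair C f g = Pair C f g"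
proof -
  assume a: "Dom C f = Dom C g"
  show ?thesis
  proof (rule pair_uniq[where A="Cod C f" and B="Cod C g"])
    show "rs g \<odot> Pair C f g \<odot> P0 C (Cod C f) (Cod C g) = rs g \<odot> f" using a by simp
    have "rs g \<odot> Pair C f g \<odot> P1 C (Cod C f) (Cod C g) = rs g \<odot> (rs f \<odot> g)" using a by simp
    also have "\<dots> = rs f \<odot> (rs g \<odot> g)" using a rs_lcomm[of g f g] by simp
    finally show "rs g \<odot> Pair C f g \<odot> P1 C (Cod C f) (Cod C g) = rs f \<odot> g" by simp
  qed (use a in simp_all)
qed

lemma lemE: "Dom C c = A \<Longrightarrow> times C (rs c) (Id C B) = rs (P0 C A B \<odot> rs c)"
proof -
  assume a: "Dom C c = A"
  have t: "times C (rs c) (Id C B) = Pair C (P0 C A B \<odot> rs c) (P1 C A B)"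
    using a by (simp add: times_def)
  show ?thesis unfolding t
  proof (rule pair_uniq[symmetric, where A=A and B=B])
    have "rs (P0 C A B \<odot> rs c) \<odot> P0 C A B = P0 C A B \<odot> rs (rs c)"
      using R5[of "P0 C A B" "rs c"] a by simp
    thus "rs (P0 C A B \<odot> rs c) \<odot> P0 C A B = rs (P1 C A B) \<odot> (P0 C A B \<odot> rs c)" using a by simp
  qed (use a in simp_all)
qed

end



context RR
begin

lemma rd_hom0: "\<forall>A B. \<forall>f\<in>hom C A B. RD C f \<in> hom C (Prod C A B) A"
  using basic unfolding is_basic_rdrc_def by (elim conjE) assumption

lemma rd_dom[simp]: "Dom C (RD C f) = Prod C (Dom C f) (Cod C f)"
  and rd_cod[simp]: "Cod C (RD C f) = Dom C f"
proof -
  have "f \<in> hom C (Dom C f) (Cod C f)" by (simp add: hom_def)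
  hence "RD C f \<in> hom C (Prod C (Dom C f) (Cod C f)) (Dom C f)" using rd_hom0 by blast
  thus "Dom C (RD C f) = Prod C (Dom C f) (Cod C f)" "Cod C (RD C f) = Dom C f" by (simp_all add: hom_def)
qed

lemma RD5: assumes "Cod C f = Dom C g"
  shows "RD C (f \<odot> g) = Pair C (P0 C (Dom C f) (Cod C g))
            (Pair C (P0 C (Dom C f) (Cod C g) \<odot> f) (P1 C (Dom C f) (Cod C g)) \<odot> RD C g) \<odot> RD C f"
proof -
  have H: "\<forall>A B D. \<forall>f\<in>hom C A B. \<forall>g\<in>hom C B D.
        RD C (Cmp C f g) =
          Cmp C (Pair C (P0 C A D)
                        (Cmp C (Pair C (Cmp C (P0 C A D) f) (P1 C A D)) (RD C g)))
                (RD C f)"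
    using basic unfolding is_basic_rdrc_def by (elim conjE) assumption
  have "f \<in> hom C (Dom C f) (Cod C f)" "g \<in> hom C (Cod C f) (Cod C g)" using assms by (simp_all add: hom_def)
  thus ?thesis using H by blast
qed

lemma RD8: "rs (RD C f) = times C (rs f) (Id C (Cod C f))"
proof -
  have H: "\<forall>A B. \<forall>f\<in>hom C A B. Rst C (RD C f) = times C (Rst C f) (Id C B)"
    using basic unfolding is_basic_rdrc_def by (elim conjE) assumption
  have "f \<in> hom C (Dom C f) (Cod C f)" by (simp_all add: hom_def)
  thus ?thesis using H by blast
qed

lemma RD9: "RD C (rs f) = times C (rs f) (Id C (Dom C f)) \<odot> P1 C (Dom C f) (Dom C f)"
proof -
  have H: "\<forall>A B. \<forall>f\<in>hom C A B.
        RD C (Rst C f) = Cmp C (times C (Rst C f) (Id C A)) (P1 C A A)"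
    using basic unfolding is_basic_rdrc_def by (elim conjE) assumption
  have "f \<in> hom C (Dom C f) (Cod C f)" by (simp_all add: hom_def)
  thus ?thesis using H by blast
qed

lemma lemA: assumes a: "Dom C c = A" "Dom C f = A"
  shows "RD C (rs c \<odot> f) = rs (P0 C A (Cod C f) \<odot> rs c) \<odot> RD C f"
proof -
  define B where "B = Cod C f"
  define e where "e = rs (P0 C A B \<odot> rs c)"
  define X where "X = e \<odot> RD C f"
  have pe: "Pair C (P0 C A B \<odot> rs c) (P1 C A B) = e"
    using lemE[of c A B] a unfolding e_def by (simp add: times_def)
  have r5: "RD C (rs c \<odot> f) = Pair C (P0 C A B)
            (Pair C (P0 C A B \<odot> rs c) (P1 C A B) \<odot> RD C f) \<odot> RD C (rs c)"
    using RD5[of "rs c" f] a unfolding B_def by simp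
  have r9: "RD C (rs c) = rs (P0 C A A \<odot> rs c) \<odot> P1 C A A"
    using RD9[of c] lemE[of c A A] a by simp
  have eh: "Dom C e = Prod C A B" "Cod C e = Prod C A B" unfolding e_def using a by simp_all
  have Xh: "Dom C X = Prod C A B" "Cod C X = A" unfolding X_def using eh a B_def by simp_all
  define Y where "Y = Pair C (P0 C A B) X"
  have Yh: "Dom C Y = Prod C A B" "Cod C Y = Prod C A A" unfolding Y_def using Xh by simp_all
  have "RD C (rs c \<odot> f) = Y \<odot> (rs (P0 C A A \<odot> rs c) \<odot> P1 C A A)"
    using r5 r9 pe unfolding Y_def X_def by simp
  also have "\<dots> = (Y \<odot> rs (P0 C A A \<odot> rs c)) \<odot> P1 C A A" using Yh a by simp
  also have "Y \<odot> rs (P0 C A A \<odot> rs c) = rs (Y \<odot> (P0 C A A \<odot> rs c)) \<odot> Y"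
    by (rule R5) (use Yh a in simp)
  also have "Y \<odot> (P0 C A A \<odot> rs c) = rs X \<odot> (P0 C A B \<odot> rs c)"
    unfolding Y_def using Xh a by simp
  also have "rs (rs X \<odot> (P0 C A B \<odot> rs c)) = rs X \<odot> rs (P0 C A B \<odot> rs c)"
    by (rule R4) (use Xh a in simp)
  also have "rs X \<odot> rs (P0 C A B \<odot> rs c) \<odot> Y \<odot> P1 C A A = rs X \<odot> (e \<odot> X)"
    unfolding Y_def e_def using Xh a by simp
  also have "rs X \<odot> (e \<odot> X) = e \<odot> (rs X \<odot> X)"
    unfolding e_def by (rule rs_lcomm) (use Xh a in simp_all)
  also have "e \<odot> (rs X \<odot> X) = e \<odot> RD C f" unfolding X_def e_def using a B_def by simp
  finally show ?thesis unfolding e_def B_def .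
qed

end



context RR
begin

lemma leq_antisym: assumes d: "Dom C f = Dom C g" and fg: "leq C f g" and gf: "leq C g f" shows "f = g"
proof -
  have f: "rs f \<odot> g = f" using fg by (simp add: leq_def)
  have g: "rs g \<odot> f = g" using gf by (simp add: leq_def)
  have 1: "rs f = rs f \<odot> rs g" using R4[of f g] d f by simp
  have 2: "rs g = rs g \<odot> rs f" using R4[of g f] d g by simp
  have "rs f = rs g" using 1 2 rcomm[OF d] by simp
  thus ?thesis using f by (metis rs_f)
qed

lemma join_uniq: assumes "is_join C A B F j1" "is_join C A B F j2" shows "j1 = j2"
proof (rule leq_antisym)
  show "leq C j1 j2" using assms unfolding is_join_def by blast
  show "leq C j2 j1" using assms unfolding is_join_def by blast
  show "Dom C j1 = Dom C j2" using assms unfolding is_join_def hom_def by simp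
qed

lemma join_eq: "is_join C A B F j \<Longrightarrow> join C A B F = j"
  unfolding join_def using join_uniq by blast

lemma jn: assumes "F \<subseteq> hom C A B" "countable F" "\<forall>f\<in>F. \<forall>g\<in>F. f \<noteq> g \<longrightarrow> disjoint C f g"
  shows "\<exists>j. is_join C A B F j"
   and "is_join C A B F j \<Longrightarrow> h \<in> hom C A' A \<Longrightarrow> k \<in> hom C B B' \<Longrightarrow>
         is_join C A' B' ((\<lambda>f. h \<odot> f \<odot> k) ` F) (h \<odot> j \<odot> k)"
proof -
  have H: "\<forall>A B F. F \<subseteq> hom C A B \<and> countable F \<and>
        (\<forall>f\<in>F. \<forall>g\<in>F. f \<noteq> g \<longrightarrow> disjoint C f g) \<longrightarrow>
        (\<exists>j. is_join C A B F j) \<and>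
        (\<forall>j A' B' h k. is_join C A B F j \<and> h \<in> hom C A' A \<and> k \<in> hom C B B' \<longrightarrow>
           is_join C A' B' ((\<lambda>f. Cmp C (Cmp C h f) k) ` F) (Cmp C (Cmp C h j) k))"
    using joins unfolding has_countable_disjoint_joins_def .
  note H2 = mp[OF spec[OF spec[OF spec[OF H, of A], of B], of F]]
  have H3: "(\<exists>j. is_join C A B F j) \<and>
        (\<forall>j A' B' h k. is_join C A B F j \<and> h \<in> hom C A' A \<and> k \<in> hom C B B' \<longrightarrow>
           is_join C A' B' ((\<lambda>f. Cmp C (Cmp C h f) k) ` F) (Cmp C (Cmp C h j) k))"
    by (rule H2) (use assms in blast)
  show "\<exists>j. is_join C A B F j" using H3 by blast
  show "is_join C A B F j \<Longrightarrow> h \<in> hom C A' A \<Longrightarrow> k \<in> hom C B B' \<Longrightarrow>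
         is_join C A' B' ((\<lambda>f. h \<odot> f \<odot> k) ` F) (h \<odot> j \<odot> k)" using H3 by blast
qed

lemma nd_iff: "nowhere_defined C x \<longleftrightarrow> is_join C (Dom C x) (Cod C x) {} x"
  by (simp add: nowhere_defined_def is_join_def hom_def)

lemma nd_comp: assumes "nowhere_defined C x" "Cod C h = Dom C x" "Dom C k = Cod C x"
  shows "nowhere_defined C (h \<odot> x \<odot> k)"
proof -
  have "is_join C (Dom C h) (Cod C k) ((\<lambda>f. h \<odot> f \<odot> k) ` {}) (h \<odot> x \<odot> k)"
    by (rule jn(2)[of "{}" "Dom C x" "Cod C x"]) (use assms in \<open>simp_all add: nd_iff hom_def\<close>)
  thus ?thesis using assms by (simp add: nd_iff)
qed

lemma nd_l: "nowhere_defined C x \<Longrightarrow> Cod C h = Dom C x \<Longrightarrow> nowhere_defined C (h \<odot> x)"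
  using nd_comp[of x h "Id C (Cod C x)"] by simp
lemma nd_r: "nowhere_defined C x \<Longrightarrow> Dom C k = Cod C x \<Longrightarrow> nowhere_defined C (x \<odot> k)"
  using nd_comp[of x "Id C (Dom C x)" k] by simp

lemma nd_uniq: assumes "nowhere_defined C x" "nowhere_defined C y" "Dom C x = Dom C y" "Cod C x = Cod C y"
  shows "x = y"
proof (rule leq_antisym)
  show "leq C x y" using assms unfolding nowhere_defined_def hom_def by auto
  show "leq C y x" using assms unfolding nowhere_defined_def hom_def by auto
qed (use assms in simp)

lemma nd_rs: assumes nx: "nowhere_defined C x" shows "nowhere_defined C (rs x)"
proof -
  obtain e where e: "is_join C (Dom C x) (Dom C x) {} e" using jn(1)[of "{}" "Dom C x" "Dom C x"] by auto
  have ed: "Dom C e = Dom C x" "Cod C e = Dom C x" using e by (auto simp: is_join_def hom_def)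
  have ne: "nowhere_defined C e" using e ed by (simp add: nd_iff)
  have "leq C e (Id C (Dom C x))" using ne ed by (auto simp: nowhere_defined_def hom_def)
  hence ree: "rs e = e" using ed by (simp add: leq_def)
  have n1: "nowhere_defined C (e \<odot> x)" by (rule nd_r[OF ne]) (simp add: ed)
  have ex: "e \<odot> x = x" by (rule nd_uniq[OF n1 nx]) (simp_all add: ed)
  have "rs x = rs (e \<odot> rs x)" using ex D2[of e x] ed by simp
  also have "e \<odot> rs x = e"
    by (rule nd_uniq[OF nd_r[OF ne] ne]) (simp_all add: ed)
  finally show ?thesis using ree ne by simp
qed

lemma nd_unrs: "nowhere_defined C (rs x) \<Longrightarrow> nowhere_defined C x"
  using nd_r[of "rs x" x] by simp

lemma disj_sym: assumes "Dom C a = Dom C b" "disjoint C a b" shows "disjoint C b a"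
proof -
  have "nowhere_defined C (rs (rs a \<odot> b))" using assms nd_rs by (simp add: disjoint_def)
  hence "nowhere_defined C (rs (rs b \<odot> a))" using assms by (simp add: R4 rcomm)
  thus ?thesis by (simp add: disjoint_def nd_unrs)
qed

lemma disj_rs: assumes "Dom C a = Dom C b" "disjoint C a b" shows "disjoint C (rs a) (rs b)"
proof -
  have "nowhere_defined C (rs (rs a \<odot> b))" using assms nd_rs by (simp add: disjoint_def)
  thus ?thesis using assms by (simp add: R4 disjoint_def)
qed

lemma bj_ex: assumes "a \<in> hom C A B" "b \<in> hom C A B" "disjoint C a b"
  shows "\<exists>j. is_join C A B {a,b} j"
proof (rule jn(1))
  show "\<forall>f\<in>{a, b}. \<forall>g\<in>{a, b}. f \<noteq> g \<longrightarrow> disjoint C f g"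
    using assms disj_sym[of a b] by (auto simp: hom_def)
qed (use assms in auto)

lemma bj_pres: assumes "a \<in> hom C A B" "b \<in> hom C A B" "disjoint C a b" "is_join C A B {a,b} j"
   "h \<in> hom C D A" "k \<in> hom C B E"
  shows "is_join C D E {h \<odot> a \<odot> k, h \<odot> b \<odot> k} (h \<odot> j \<odot> k)"
proof -
  have "is_join C D E ((\<lambda>f. h \<odot> f \<odot> k) ` {a,b}) (h \<odot> j \<odot> k)"
  proof (rule jn(2))
    show "\<forall>f\<in>{a, b}. \<forall>g\<in>{a, b}. f \<noteq> g \<longrightarrow> disjoint C f g"
      using assms disj_sym[of a b] by (auto simp: hom_def)
  qed (use assms in auto)
  thus ?thesis by simp
qed

end



context RR
begin

lemma core: assumes a: "a \<in> hom C A B" and b: "b \<in> hom C A B" and d: "disjoint C a b"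
  and j: "is_join C A B {a,b} j"
  shows "is_join C A A {rs a, rs b} (rs j)"
proof -
  have ad: "Dom C a = A" "Cod C a = B" "Dom C b = A" "Cod C b = B" using a b by (auto simp: hom_def)
  have ra: "rs a \<in> hom C A A" "rs b \<in> hom C A A" using ad by (auto simp: hom_def)
  have dr: "disjoint C (rs a) (rs b)" using disj_rs[OF _ d] ad by simp
  obtain k where k: "is_join C A A {rs a, rs b} k" using bj_ex[OF ra dr] by auto
  have jh: "j \<in> hom C A B" using j by (simp add: is_join_def)
  have jd: "Dom C j = A" "Cod C j = B" using jh by (auto simp: hom_def)
  have kh: "k \<in> hom C A A" using k by (simp add: is_join_def)
  have kd: "Dom C k = A" "Cod C k = A" using kh by (auto simp: hom_def)
  have "is_join C A B {Id C A \<odot> rs a \<odot> j, Id C A \<odot> rs b \<odot> j} (Id C A \<odot> k \<odot> j)"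
    by (rule bj_pres[OF ra dr k]) (use jh in \<open>auto simp: hom_def\<close>)
  moreover have "rs a \<odot> j = a" "rs b \<odot> j = b" using j by (auto simp: is_join_def leq_def)
  ultimately have "is_join C A B {a,b} (k \<odot> j)" using ad kd by simp
  hence kj: "k \<odot> j = j" using join_uniq j by blast
  have "\<forall>g\<in>hom C A A. (\<forall>f\<in>{rs a, rs b}. leq C f g) \<longrightarrow> leq C k g" using k by (simp add: is_join_def)
  moreover have "Id C A \<in> hom C A A" by (simp add: hom_def)
  moreover have "\<forall>f\<in>{rs a, rs b}. leq C f (Id C A)" using ad by (simp add: leq_def)
  ultimately have "leq C k (Id C A)" by blast
  hence kr: "rs k = k" using kd by (simp add: leq_def)
  have rj: "rs j = k \<odot> rs j"
  proof -
    have "rs j = rs (rs k \<odot> j)" using kj kr by simp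
    also have "\<dots> = rs k \<odot> rs j" by (rule R4) (simp add: kd jd)
    finally show ?thesis using kr by simp
  qed
  have l1: "leq C (rs j) k"
  proof -
    have "rs (rs j) \<odot> k = rs j \<odot> rs k" using kr by simp
    also have "\<dots> = rs k \<odot> rs j" by (rule rcomm) (simp add: kd jd)
    finally show ?thesis using rj kr by (simp add: leq_def)
  qed
  have "\<forall>g\<in>hom C A A. (\<forall>f\<in>{rs a, rs b}. leq C f g) \<longrightarrow> leq C k g" using k by (simp add: is_join_def)
  moreover have "rs j \<in> hom C A A" using jd by (simp add: hom_def)
  moreover have "\<forall>f\<in>{rs a, rs b}. leq C f (rs j)"
  proof -
    have "rs a \<odot> rs j = rs (rs a \<odot> j)" by (rule R4[symmetric]) (simp add: ad jd)
    moreover have "rs b \<odot> rs j = rs (rs b \<odot> j)" by (rule R4[symmetric]) (simp add: ad jd)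
    ultimately show ?thesis using \<open>rs a \<odot> j = a\<close> \<open>rs b \<odot> j = b\<close> by (simp add: leq_def)
  qed
  ultimately have l2: "leq C k (rs j)" by blast
  have "rs j = k" by (rule leq_antisym[OF _ l1 l2]) (simp add: kd jd)
  with k show ?thesis by simp
qed

lemma RJ: assumes a: "a \<in> hom C A B" and b: "b \<in> hom C A B" and d: "disjoint C a b"
  and j: "is_join C A B {a,b} j"
  and h: "h \<in> hom C D (Prod C A B)" and k: "k \<in> hom C A E"
  shows "is_join C D E {h \<odot> RD C a \<odot> k, h \<odot> RD C b \<odot> k} (h \<odot> RD C j \<odot> k)"
proof -
  define s where "s = P0 C A B"
  have ad: "Dom C a = A" "Cod C a = B" "Dom C b = A" "Cod C b = B" using a b by (auto simp: hom_def)
  have jh: "j \<in> hom C A B" using j by (simp add: is_join_def)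
  have jd: "Dom C j = A" "Cod C j = B" using jh by (auto simp: hom_def)
  have hd: "Dom C h = D" "Cod C h = Prod C A B" using h by (auto simp: hom_def)
  have kd: "Dom C k = A" "Cod C k = E" using k by (auto simp: hom_def)
  have sh: "s \<in> hom C (Prod C A B) A" unfolding s_def by (simp add: hom_def)
  have "is_join C (Prod C A B) B {s \<odot> a \<odot> Id C B, s \<odot> b \<odot> Id C B} (s \<odot> j \<odot> Id C B)"
    by (rule bj_pres[OF a b d j sh]) (simp add: hom_def)
  hence sj: "is_join C (Prod C A B) B {s \<odot> a, s \<odot> b} (s \<odot> j)" using ad jd unfolding s_def by simp
  have sah: "s \<odot> a \<in> hom C (Prod C A B) B" "s \<odot> b \<in> hom C (Prod C A B) B"
    using ad unfolding s_def by (simp_all add: hom_def)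
  have ds: "disjoint C (s \<odot> a) (s \<odot> b)"
  proof -
    have "rs (s \<odot> a) \<odot> (s \<odot> b) = (rs (s \<odot> a) \<odot> s) \<odot> b" using ad unfolding s_def by simp
    also have "rs (s \<odot> a) \<odot> s = s \<odot> rs a" by (rule R5[symmetric]) (simp add: s_def ad)
    also have "s \<odot> rs a \<odot> b = s \<odot> (rs a \<odot> b)" using ad unfolding s_def by simp
    finally have e: "rs (s \<odot> a) \<odot> (s \<odot> b) = s \<odot> (rs a \<odot> b)" .
    have "nowhere_defined C (s \<odot> (rs a \<odot> b))"
      by (rule nd_l) (use d ad in \<open>simp_all add: disjoint_def s_def\<close>)
    thus ?thesis using e by (simp add: disjoint_def)
  qed
  have cj: "is_join C (Prod C A B) (Prod C A B) {rs (s \<odot> a), rs (s \<odot> b)} (rs (s \<odot> j))"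
    by (rule core[OF sah ds sj])
  have dr: "disjoint C (rs (s \<odot> a)) (rs (s \<odot> b))" using disj_rs[OF _ ds] ad unfolding s_def by simp
  have rh: "rs (s \<odot> a) \<in> hom C (Prod C A B) (Prod C A B)" "rs (s \<odot> b) \<in> hom C (Prod C A B) (Prod C A B)"
    using ad unfolding s_def by (simp_all add: hom_def)
  have pj: "is_join C D E {h \<odot> rs (s \<odot> a) \<odot> (RD C j \<odot> k), h \<odot> rs (s \<odot> b) \<odot> (RD C j \<odot> k)}
                   (h \<odot> rs (s \<odot> j) \<odot> (RD C j \<odot> k))"
    by (rule bj_pres[OF rh dr cj h]) (use jd kd in \<open>simp add: hom_def\<close>)
  have gen: "RD C x = rs (s \<odot> x) \<odot> RD C j" if x: "x \<in> hom C A B" "rs x \<odot> j = x" for x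
  proof -
    have xd: "Dom C x = A" using x by (simp add: hom_def)
    have "RD C x = RD C (rs x \<odot> j)" using x by simp
    also have "\<dots> = rs (P0 C A (Cod C j) \<odot> rs x) \<odot> RD C j" by (rule lemA) (simp_all add: xd jd)
    also have "rs (P0 C A (Cod C j) \<odot> rs x) = rs (s \<odot> x)" unfolding s_def using D2[of "P0 C A B" x] xd jd by simp
    finally show ?thesis .
  qed
  have e1: "RD C a = rs (s \<odot> a) \<odot> RD C j" by (rule gen[OF a]) (use j in \<open>simp add: is_join_def leq_def\<close>)
  have e2: "RD C b = rs (s \<odot> b) \<odot> RD C j" by (rule gen[OF b]) (use j in \<open>simp add: is_join_def leq_def\<close>)
  have e3: "RD C j = rs (s \<odot> j) \<odot> RD C j"
  proof -
    have "RD C j = rs (RD C j) \<odot> RD C j" by simp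
    also have "rs (RD C j) = times C (rs j) (Id C B)" using RD8[of j] jd by simp
    also have "\<dots> = rs (s \<odot> rs j)" unfolding s_def by (rule lemE) (simp add: jd)
    also have "\<dots> = rs (s \<odot> j)" unfolding s_def by (rule D2) (simp add: jd)
    finally show ?thesis .
  qed
  have f1: "h \<odot> rs (s \<odot> a) \<odot> (RD C j \<odot> k) = h \<odot> RD C a \<odot> k"
    unfolding e1 using hd kd jd ad unfolding s_def by simp
  have f2: "h \<odot> rs (s \<odot> b) \<odot> (RD C j \<odot> k) = h \<odot> RD C b \<odot> k"
    unfolding e2 using hd kd jd ad unfolding s_def by simp
  have f3: "h \<odot> RD C j \<odot> k = h \<odot> (rs (s \<odot> j) \<odot> RD C j) \<odot> k"
    by (rule arg_cong[where f="\<lambda>x. h \<odot> x \<odot> k", OF e3])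
  also have "\<dots> = h \<odot> rs (s \<odot> j) \<odot> (RD C j \<odot> k)"
    using hd kd jd ad unfolding s_def by simp
  finally have f3: "h \<odot> rs (s \<odot> j) \<odot> (RD C j \<odot> k) = h \<odot> RD C j \<odot> k" by simp
  show ?thesis using pj unfolding f1 f2 f3 .
qed

end



context RR
begin

lemma main:
  assumes bT: "bT \<in> hom C (Prod C G U) (One C)"
    and bF: "bF \<in> hom C (Prod C G U) (One C)"
    and nd: "nowhere_defined C (Cmp C (Rst C bT) (Rst C bF))"
    and m: "m \<in> hom C (Prod C G U) T"
    and n: "n \<in> hom C (Prod C G U) T"
    and v: "v \<in> hom C (Prod C G U) T"
  shows
    "Cmp C (Cmp C (Pair C (Pair C (Id C (Prod C G U)) (P1 C G U)) v)
                  (RD C (join C (Prod C (Prod C G U) U) T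
                          {Cmp C (Rst C (rebind C G U bT)) (rebind C G U m),
                           Cmp C (Rst C (rebind C G U bF)) (rebind C G U n)})))
           (P1 C (Prod C G U) U)
     = join C (Prod C G U) U
         {Cmp C (Rst C bT)
            (Cmp C (Cmp C (Pair C (Pair C (Id C (Prod C G U)) (P1 C G U)) v)
                          (RD C (rebind C G U m))) (P1 C (Prod C G U) U)),
          Cmp C (Rst C bF)
            (Cmp C (Cmp C (Pair C (Pair C (Id C (Prod C G U)) (P1 C G U)) v)
                          (RD C (rebind C G U n))) (P1 C (Prod C G U) U))}"
proof -
  define p where "p = times C (P0 C G U) (Id C U)"
  have pd: "Dom C p = Prod C (Prod C G U) U" "Cod C p = Prod C G U" unfolding p_def by simp_all
  have rb: "rebind C G U x = p \<odot> x" for x unfolding rebind_def p_def ..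
  have dd: "Dom C bT = Prod C G U" "Cod C bT = One C" "Dom C bF = Prod C G U" "Cod C bF = One C"
     "Dom C m = Prod C G U" "Cod C m = T" "Dom C n = Prod C G U" "Cod C n = T"
     "Dom C v = Prod C G U" "Cod C v = T"
    using bT bF m n v by (auto simp: hom_def)
  define a where "a = rs (p \<odot> bT) \<odot> (p \<odot> m)"
  define b where "b = rs (p \<odot> bF) \<odot> (p \<odot> n)"
  have ah: "a \<in> hom C (Prod C (Prod C G U) U) T" "b \<in> hom C (Prod C (Prod C G U) U) T"
    unfolding a_def b_def using pd dd by (simp_all add: hom_def)
  have n0: "nowhere_defined C (rs bT \<odot> bF)"
  proof (rule nd_unrs)
    have "rs (rs bT \<odot> bF) = rs bT \<odot> rs bF" by (rule R4) (simp add: dd)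
    thus "nowhere_defined C (rs (rs bT \<odot> bF))" using nd by simp
  qed
  have n1: "nowhere_defined C (p \<odot> (rs bT \<odot> bF))" by (rule nd_l[OF n0]) (simp add: pd dd)
  have eq1: "rs (p \<odot> bT) \<odot> rs (p \<odot> bF) = rs (p \<odot> (rs bT \<odot> bF))"
  proof -
    have "rs (p \<odot> bT) \<odot> rs (p \<odot> bF) = rs (rs (p \<odot> bT) \<odot> (p \<odot> bF))"
      by (rule R4[symmetric]) (simp add: pd dd)
    also have "rs (p \<odot> bT) \<odot> (p \<odot> bF) = (rs (p \<odot> bT) \<odot> p) \<odot> bF" using pd dd by simp
    also have "rs (p \<odot> bT) \<odot> p = p \<odot> rs bT" by (rule R5[symmetric]) (simp add: pd dd)
    also have "p \<odot> rs bT \<odot> bF = p \<odot> (rs bT \<odot> bF)" using pd dd by simp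
    finally show ?thesis .
  qed
  have n2: "nowhere_defined C (rs (p \<odot> bT) \<odot> rs (p \<odot> bF))" unfolding eq1 by (rule nd_rs[OF n1])
  have ra: "rs a = rs (p \<odot> bT) \<odot> rs (p \<odot> m)" unfolding a_def by (rule R4) (simp add: pd dd)
  have rbb: "rs b = rs (p \<odot> bF) \<odot> rs (p \<odot> n)" unfolding b_def by (rule R4) (simp add: pd dd)
  have "rs a \<odot> rs b = rs (p \<odot> bT) \<odot> (rs (p \<odot> m) \<odot> (rs (p \<odot> bF) \<odot> rs (p \<odot> n)))"
    unfolding ra rbb using pd dd by simp
  also have "\<dots> = rs (p \<odot> m) \<odot> (rs (p \<odot> bT) \<odot> (rs (p \<odot> bF) \<odot> rs (p \<odot> n)))"
    by (rule rs_lcomm) (simp_all add: pd dd)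
  also have "\<dots> = rs (p \<odot> m) \<odot> (rs (p \<odot> bT) \<odot> rs (p \<odot> bF)) \<odot> rs (p \<odot> n)"
    using pd dd by simp
  finally have eq2: "rs a \<odot> rs b = rs (p \<odot> m) \<odot> (rs (p \<odot> bT) \<odot> rs (p \<odot> bF)) \<odot> rs (p \<odot> n)" .
  have "nowhere_defined C (rs (p \<odot> m) \<odot> (rs (p \<odot> bT) \<odot> rs (p \<odot> bF)) \<odot> rs (p \<odot> n))"
    by (rule nd_comp[OF n2]) (simp_all add: pd dd)
  hence "nowhere_defined C (rs (rs a \<odot> b))"
    using eq2 R4[of a b] ah by (simp add: hom_def)
  hence dab: "disjoint C a b" by (simp add: disjoint_def nd_unrs)
  obtain j where j: "is_join C (Prod C (Prod C G U) U) T {a,b} j" using bj_ex[OF ah dab] by auto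
  define L where "L = Pair C (Id C (Prod C G U)) (P1 C G U)"
  define Q where "Q = Pair C L v"
  have Ld: "Dom C L = Prod C G U" "Cod C L = Prod C (Prod C G U) U" unfolding L_def by simp_all
  have Qd: "Dom C Q = Prod C G U" "Cod C Q = Prod C (Prod C (Prod C G U) U) T"
    unfolding Q_def using Ld dd by simp_all
  have Qh: "Q \<in> hom C (Prod C G U) (Prod C (Prod C (Prod C G U) U) T)" using Qd by (simp add: hom_def)
  have P1h: "P1 C (Prod C G U) U \<in> hom C (Prod C (Prod C G U) U) U" by (simp add: hom_def)
  have J: "is_join C (Prod C G U) U {Q \<odot> RD C a \<odot> P1 C (Prod C G U) U, Q \<odot> RD C b \<odot> P1 C (Prod C G U) U}
             (Q \<odot> RD C j \<odot> P1 C (Prod C G U) U)"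
    by (rule RJ[OF ah dab j Qh P1h])
  have Lp: "L \<odot> p = Id C (Prod C G U)"
  proof -
    have pp: "p = Pair C (P0 C (Prod C G U) U \<odot> P0 C G U) (P1 C (Prod C G U) U)"
      unfolding p_def times_def by simp
    have "L \<odot> p = Pair C (L \<odot> (P0 C (Prod C G U) U \<odot> P0 C G U)) (L \<odot> P1 C (Prod C G U) U)"
      unfolding pp by (rule pair_post) (simp_all add: Ld)
    also have "L \<odot> (P0 C (Prod C G U) U \<odot> P0 C G U) = P0 C G U" unfolding L_def by simp
    also have "L \<odot> P1 C (Prod C G U) U = P1 C G U" unfolding L_def by simp
    finally show ?thesis by (simp add: pair_eta)
  qed
  have rvQ: "rs v \<odot> Q = Q" unfolding Q_def by (rule rs_pair_l) (simp add: Ld dd)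
  have key: "Q \<odot> RD C (rs (p \<odot> x) \<odot> (p \<odot> y)) \<odot> P1 C (Prod C G U) U
             = rs x \<odot> (Q \<odot> RD C (p \<odot> y) \<odot> P1 C (Prod C G U) U)"
    if x: "Dom C x = Prod C G U" and y: "Dom C y = Prod C G U" "Cod C y = T" for x y
  proof -
    let ?W = "Prod C (Prod C G U) U"
    have r1: "RD C (rs (p \<odot> x) \<odot> (p \<odot> y)) = rs (P0 C ?W T \<odot> rs (p \<odot> x)) \<odot> RD C (p \<odot> y)"
      using lemA[of "p \<odot> x" ?W "p \<odot> y"] pd x y by simp
    have "Q \<odot> rs (P0 C ?W T \<odot> rs (p \<odot> x)) = rs (Q \<odot> (P0 C ?W T \<odot> rs (p \<odot> x))) \<odot> Q"
      by (rule R5) (simp add: Qd pd x)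
    also have "Q \<odot> (P0 C ?W T \<odot> rs (p \<odot> x)) = rs v \<odot> (L \<odot> rs (p \<odot> x))"
      unfolding Q_def using Ld dd pd x by simp
    also have "rs (rs v \<odot> (L \<odot> rs (p \<odot> x))) = rs v \<odot> rs (L \<odot> rs (p \<odot> x))"
      by (rule R4) (simp add: Ld dd pd x)
    also have "rs (L \<odot> rs (p \<odot> x)) = rs (L \<odot> (p \<odot> x))" by (rule D2) (simp add: Ld pd x)
    also have "L \<odot> (p \<odot> x) = (L \<odot> p) \<odot> x" using Ld pd x by simp
    also have "\<dots> = x" unfolding Lp using x by simp
    also have "rs v \<odot> rs x \<odot> Q = rs x \<odot> (rs v \<odot> Q)"
      using rs_lcomm[of v x Q] Qd dd x by simp
    finally have e: "Q \<odot> rs (P0 C ?W T \<odot> rs (p \<odot> x)) = rs x \<odot> Q" using rvQ by simp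
    have "Q \<odot> RD C (rs (p \<odot> x) \<odot> (p \<odot> y)) \<odot> P1 C (Prod C G U) U
          = (Q \<odot> rs (P0 C ?W T \<odot> rs (p \<odot> x))) \<odot> (RD C (p \<odot> y) \<odot> P1 C (Prod C G U) U)"
      unfolding r1 using Qd pd x y by simp
    also have "\<dots> = rs x \<odot> (Q \<odot> RD C (p \<odot> y) \<odot> P1 C (Prod C G U) U)"
      unfolding e using Qd pd x y by simp
    finally show ?thesis .
  qed
  have k1: "Q \<odot> RD C a \<odot> P1 C (Prod C G U) U = rs bT \<odot> (Q \<odot> RD C (p \<odot> m) \<odot> P1 C (Prod C G U) U)"
    unfolding a_def by (rule key) (simp_all add: dd)
  have k2: "Q \<odot> RD C b \<odot> P1 C (Prod C G U) U = rs bF \<odot> (Q \<odot> RD C (p \<odot> n) \<odot> P1 C (Prod C G U) U)"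
    unfolding b_def by (rule key) (simp_all add: dd)
  have jq: "join C (Prod C (Prod C G U) U) T {a, b} = j" by (rule join_eq[OF j])
  have J2: "join C (Prod C G U) U {rs bT \<odot> (Q \<odot> RD C (p \<odot> m) \<odot> P1 C (Prod C G U) U),
                                    rs bF \<odot> (Q \<odot> RD C (p \<odot> n) \<odot> P1 C (Prod C G U) U)}
            = Q \<odot> RD C j \<odot> P1 C (Prod C G U) U"
    by (rule join_eq) (use J in \<open>simp only: k1 k2\<close>)
  show ?thesis unfolding rb a_def[symmetric] b_def[symmetric] jq L_def[symmetric] Q_def[symmetric]
    using J2 by simp
qed

end

theorem mainTheorem4:
  fixes C :: "('o, 'a, 'z) rdcat_scheme"
    and G U T :: 'o and bT bF m n v :: 'a
  assumes "is_basic_rdrc C"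
    and "has_countable_disjoint_joins C"
    and "bT \<in> hom C (Prod C G U) (One C)"
    and "bF \<in> hom C (Prod C G U) (One C)"
    and "nowhere_defined C (Cmp C (Rst C bT) (Rst C bF))"
    and "m \<in> hom C (Prod C G U) T"
    and "n \<in> hom C (Prod C G U) T"
    and "v \<in> hom C (Prod C G U) T"
  shows
    "Cmp C (Cmp C (Pair C (Pair C (Id C (Prod C G U)) (P1 C G U)) v)
                  (RD C (join C (Prod C (Prod C G U) U) T
                          {Cmp C (Rst C (rebind C G U bT)) (rebind C G U m),
                           Cmp C (Rst C (rebind C G U bF)) (rebind C G U n)})))
           (P1 C (Prod C G U) U)
     = join C (Prod C G U) U
         {Cmp C (Rst C bT)
            (Cmp C (Cmp C (Pair C (Pair C (Id C (Prod C G U)) (P1 C G U)) v)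
                          (RD C (rebind C G U m))) (P1 C (Prod C G U) U)),
          Cmp C (Rst C bF)
            (Cmp C (Cmp C (Pair C (Pair C (Id C (Prod C G U)) (P1 C G U)) v)
                          (RD C (rebind C G U n))) (P1 C (Prod C G U) U))}"
proof -
  interpret RR C by unfold_locales (use assms in auto)
  show ?thesis by (rule main) (use assms in auto)
qed


end
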